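(* Let $n\ge2$, $\omega\in(0,1)$, and let $B$ be a random variable with mean $0$ and variance $1$. Let $B_1,\dots,B_n$ be independent with $B_i\overset d=\mu_i+\sigma_iB$, $\sigma_i>0$, $\sigma_1\le\cdots\le\sigma_n$. Then for every sequence $\tau\in\mathsf S_n$ and every schedule $\boldsymbol x$, $$C(\tau,\boldsymbol x,\omega)\ge\bigl[\omega\,\mathbb EB(\omega)^-+(1-\omega)\,\mathbb EB(\omega)^+\bigr]\sum_{i=1}^{n-1}\sigma_i,$$ where $B(\omega)=B-Q_B(1-\omega)$ and $Q_B(y)=\inf\{x:y\le\mathbb P(B\le x)\}$.
   Context: Appointment model: a sequence is a permutation $\tau\in\mathsf S_n$, $\tau(i)$ the patient in slot $i$; a schedule is $\boldsymbol x=(x_1,\dots,x_n)\in\mathbb R_+^n$, $x_j$ the interarrival time between patient $j$ and the next patient. Waiting and idle times: $W_1=I_1=0$, $W_{i+1}=(W_i+B_{\tau(i)}-x_{\tau(i)})^+$, $I_{i+1}=(W_i+B_{\tau(i)}-x_{\tau(i)})^-$, $a^+=\max\{0,a\}$, $a^-=\max\{0,-a\}$. Cost $C(\tau,\boldsymbol x,\omega)=\omega\sum_{i=1}^n\mathbb EI_i+(1-\omega)\sum_{i=1}^n\mathbb EW_i$. *)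

theory Defs
  imports "HOL-Probability.Probability" "HOL-Combinatorics.Permutations"
begin

text \<open>Patients and slots are indexed by 1..n. Given realised service times b (indexed by
patient), a schedule x (indexed by patient) and a sequence tau (slot to patient),
wait_time tau x b i and idle_time tau x b i are W_i and I_i (for i \<ge> 1).\<close>

fun wait_time :: "(nat \<Rightarrow> nat) \<Rightarrow> (nat \<Rightarrow> real) \<Rightarrow> (nat \<Rightarrow> real) \<Rightarrow> nat \<Rightarrow> real" where
  "wait_time \<tau> x b 0 = 0"
| "wait_time \<tau> x b (Suc 0) = 0"
| "wait_time \<tau> x b (Suc (Suc i)) =
     max 0 (wait_time \<tau> x b (Suc i) + b (\<tau> (Suc i)) - x (\<tau> (Suc i)))"

fun idle_time :: "(nat \<Rightarrow> nat) \<Rightarrow> (nat \<Rightarrow> real) \<Rightarrow> (nat \<Rightarrow> real) \<Rightarrow> nat \<Rightarrow> real" where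
  "idle_time \<tau> x b 0 = 0"
| "idle_time \<tau> x b (Suc 0) = 0"
| "idle_time \<tau> x b (Suc (Suc i)) =
     max 0 (- (wait_time \<tau> x b (Suc i) + b (\<tau> (Suc i)) - x (\<tau> (Suc i))))"

definition appt_cost ::
  "'a measure \<Rightarrow> (nat \<Rightarrow> 'a \<Rightarrow> real) \<Rightarrow> nat \<Rightarrow> (nat \<Rightarrow> nat) \<Rightarrow> (nat \<Rightarrow> real) \<Rightarrow> real \<Rightarrow> real" where
  "appt_cost M Bs n \<tau> x \<omega> =
     \<omega> * (\<Sum>i=1..n. integral\<^sup>L M (\<lambda>s. idle_time \<tau> x (\<lambda>j. Bs j s) i))
     + (1 - \<omega>) * (\<Sum>i=1..n. integral\<^sup>L M (\<lambda>s. wait_time \<tau> x (\<lambda>j. Bs j s) i))"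

definition quantile :: "'b measure \<Rightarrow> ('b \<Rightarrow> real) \<Rightarrow> real \<Rightarrow> real" where
  "quantile N B y = Inf {t::real. y \<le> measure N {s \<in> space N. B s \<le> t}}"

end

theory Submission
  imports Defs
begin


lemma pw_ineq:
  fixes \<omega> u v q' :: real
  assumes w: "0 < \<omega>" "\<omega> < 1"
  shows "\<omega> * max 0 (-(v - u)) + (1-\<omega>) * max 0 (v - u) \<ge>
     (\<omega> * max 0 (-(v - q')) + (1-\<omega>) * max 0 (v - q'))
     - max 0 (u - q') * ((1-\<omega>) - (if v \<le> q' then 1 else 0))
     + max 0 (q' - u) * ((1-\<omega>) - (if v < q' then 1 else 0))"
proof -
  consider "u \<ge> q'" "v \<le> q'" "v \<le> u" | "u \<ge> q'" "v > q'" "v \<le> u" | "u \<ge> q'" "v > q'" "v > u"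
    | "u < q'" "v < q'" "v \<le> u" | "u < q'" "v < q'" "v > u" | "u < q'" "v \<ge> q'" "v > u"
    by linarith
  then show ?thesis
  proof cases
  qed (use w in \<open>auto simp: max_def algebra_simps mult_left_mono mult_right_mono\<close>)
qed



lemma newsvendor_core:
  fixes M :: "'a measure" and N :: "'b measure" and U V :: "'a \<Rightarrow> real" and B :: "'b \<Rightarrow> real"
  assumes M: "prob_space M" and N: "prob_space N"
   and ind: "prob_space.indep_var M borel U borel V"
   and Um[measurable]: "U \<in> borel_measurable M" and Vm[measurable]: "V \<in> borel_measurable M"
   and Ui: "integrable M U" and Vi: "integrable M V"
   and Bm[measurable]: "B \<in> borel_measurable N" and Bi: "integrable N B"
   and dist: "distr M borel V = distr N borel (\<lambda>s. \<mu> + \<sigma> * B s)"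
   and sig: "\<sigma> > 0" and w: "0<\<omega>" "\<omega><1"
   and q1: "1 - \<omega> \<le> measure N {s\<in>space N. B s \<le> q}"
   and q2: "measure N {s\<in>space N. B s < q} \<le> 1 - \<omega>"
  shows "\<sigma> * (\<omega> * integral\<^sup>L N (\<lambda>s. max 0 (-(B s - q))) + (1-\<omega>) * integral\<^sup>L N (\<lambda>s. max 0 (B s - q)))
     \<le> integral\<^sup>L M (\<lambda>s. \<omega> * max 0 (-(V s - U s)) + (1-\<omega>) * max 0 (V s - U s))"
proof -
  interpret M: prob_space M by fact
  interpret N: prob_space N by fact
  define q' where "q' = \<mu> + \<sigma>*q"
  define s1 where "s1 v = (1-\<omega>) - (if v \<le> q' then 1 else 0)" for v :: real
  define s2 where "s2 v = (1-\<omega>) - (if v < q' then 1 else 0)" for v :: real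
  have s1m[measurable]: "s1 \<in> borel_measurable borel" unfolding s1_def by measurable
  have s2m[measurable]: "s2 \<in> borel_measurable borel" unfolding s2_def by measurable
  have tr: "integral\<^sup>L M (\<lambda>s. g (V s)) = integral\<^sup>L N (\<lambda>s. g (\<mu> + \<sigma> * B s))"
    if [measurable]: "g \<in> borel_measurable borel" for g :: "real \<Rightarrow> real"
  proof -
    have "integral\<^sup>L M (\<lambda>s. g (V s)) = integral\<^sup>L (distr M borel V) g"
      by (rule integral_distr[symmetric]) simp_all
    also have "\<dots> = integral\<^sup>L (distr N borel (\<lambda>s. \<mu> + \<sigma> * B s)) g" by (simp add: dist)
    also have "\<dots> = integral\<^sup>L N (\<lambda>s. g (\<mu> + \<sigma> * B s))"
      by (rule integral_distr) simp_all
    finally show ?thesis .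
  qed
  have s1V: "integral\<^sup>L M (\<lambda>s. s1 (V s)) \<le> 0"
  proof -
    have "integral\<^sup>L M (\<lambda>s. s1 (V s)) = integral\<^sup>L N (\<lambda>s. s1 (\<mu> + \<sigma> * B s))" by (rule tr) simp
    also have "\<dots> = integral\<^sup>L N (\<lambda>s. (1-\<omega>) - indicator {s\<in>space N. B s \<le> q} s)"
      apply (rule Bochner_Integration.integral_cong[OF refl]) by (use sig in \<open>auto simp: s1_def q'_def indicator_def mult_le_cancel_left_pos mult_less_cancel_left_pos\<close>)
    also have "\<dots> = (1 - \<omega>) - measure N {s\<in>space N. B s \<le> q}"
      by (subst Bochner_Integration.integral_diff) (auto simp: Int_absorb2 N.prob_space less_top[symmetric] intro!: integrable_real_indicator)
    finally show ?thesis using q1 by simp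
  qed
  have s2V: "integral\<^sup>L M (\<lambda>s. s2 (V s)) \<ge> 0"
  proof -
    have "integral\<^sup>L M (\<lambda>s. s2 (V s)) = integral\<^sup>L N (\<lambda>s. s2 (\<mu> + \<sigma> * B s))" by (rule tr) simp
    also have "\<dots> = integral\<^sup>L N (\<lambda>s. (1-\<omega>) - indicator {s\<in>space N. B s < q} s)"
      apply (rule Bochner_Integration.integral_cong[OF refl]) by (use sig in \<open>auto simp: s2_def q'_def indicator_def mult_le_cancel_left_pos mult_less_cancel_left_pos\<close>)
    also have "\<dots> = (1 - \<omega>) - measure N {s\<in>space N. B s < q}"
      by (subst Bochner_Integration.integral_diff) (auto simp: Int_absorb2 N.prob_space less_top[symmetric] intro!: integrable_real_indicator)
    finally show ?thesis using q2 by simp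
  qed
  have phiq: "integral\<^sup>L M (\<lambda>s. \<omega> * max 0 (-(V s - q')) + (1-\<omega>) * max 0 (V s - q'))
     = \<sigma> * (\<omega> * integral\<^sup>L N (\<lambda>s. max 0 (-(B s - q))) + (1-\<omega>) * integral\<^sup>L N (\<lambda>s. max 0 (B s - q)))"
  proof -
    have "integral\<^sup>L M (\<lambda>s. \<omega> * max 0 (-(V s - q')) + (1-\<omega>) * max 0 (V s - q'))
      = integral\<^sup>L N (\<lambda>s. \<omega> * max 0 (-((\<mu> + \<sigma> * B s) - q')) + (1-\<omega>) * max 0 ((\<mu> + \<sigma> * B s) - q'))"
      by (rule tr[of "\<lambda>v. \<omega> * max 0 (-(v - q')) + (1-\<omega>) * max 0 (v - q')"]) simp
    also have "(\<lambda>s. \<omega> * max 0 (-((\<mu> + \<sigma> * B s) - q')) + (1-\<omega>) * max 0 ((\<mu> + \<sigma> * B s) - q'))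
       = (\<lambda>s. (\<sigma> * \<omega>) * max 0 (-(B s - q)) + (\<sigma> * (1-\<omega>)) * max 0 (B s - q))"
    proof
      fix s
      have a: "max 0 (-((\<mu> + \<sigma> * B s) - q')) = \<sigma> * max 0 (-(B s - q))"
        using sig by (auto simp: q'_def max_def algebra_simps mult_le_cancel_left)
      have b: "max 0 (((\<mu> + \<sigma> * B s) - q')) = \<sigma> * max 0 ((B s - q))"
        using sig by (auto simp: q'_def max_def algebra_simps mult_le_cancel_left)
      show "\<omega> * max 0 (-((\<mu> + \<sigma> * B s) - q')) + (1-\<omega>) * max 0 ((\<mu> + \<sigma> * B s) - q')
       = (\<sigma> * \<omega>) * max 0 (-(B s - q)) + (\<sigma> * (1-\<omega>)) * max 0 (B s - q)"
        unfolding a b by simp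
    qed
    also have "integral\<^sup>L N \<dots> = \<sigma> * (\<omega> * integral\<^sup>L N (\<lambda>s. max 0 (-(B s - q))) + (1-\<omega>) * integral\<^sup>L N (\<lambda>s. max 0 (B s - q)))"
      using Bi by (simp add: integral_add algebra_simps)
    finally show ?thesis .
  qed
  have ind1: "M.indep_var borel ((\<lambda>u. max 0 (u - q')) \<circ> U) borel (s1 \<circ> V)"
    by (rule M.indep_var_compose[OF ind]) auto
  have ind2: "M.indep_var borel ((\<lambda>u. max 0 (q' - u)) \<circ> U) borel (s2 \<circ> V)"
    by (rule M.indep_var_compose[OF ind]) auto
  have i1: "integrable M (\<lambda>s. max 0 (U s - q'))" using Ui by auto
  have i2: "integrable M (\<lambda>s. max 0 (q' - U s))" using Ui by auto
  have is1: "integrable M (\<lambda>s. s1 (V s))" unfolding s1_def using w by (auto intro!: M.integrable_const_bound[where B=1])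
  have is2: "integrable M (\<lambda>s. s2 (V s))" unfolding s2_def using w by (auto intro!: M.integrable_const_bound[where B=1])
  have e1: "integral\<^sup>L M (\<lambda>s. max 0 (U s - q') * s1 (V s)) = integral\<^sup>L M (\<lambda>s. max 0 (U s - q')) * integral\<^sup>L M (\<lambda>s. s1 (V s))"
   and ie1: "integrable M (\<lambda>s. max 0 (U s - q') * s1 (V s))"
    using M.indep_var_lebesgue_integral[OF ind1] M.indep_var_integrable[OF ind1] i1 is1 by (auto simp: o_def)
  have e2: "integral\<^sup>L M (\<lambda>s. max 0 (q' - U s) * s2 (V s)) = integral\<^sup>L M (\<lambda>s. max 0 (q' - U s)) * integral\<^sup>L M (\<lambda>s. s2 (V s))"
   and ie2: "integrable M (\<lambda>s. max 0 (q' - U s) * s2 (V s))"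
    using M.indep_var_lebesgue_integral[OF ind2] M.indep_var_integrable[OF ind2] i2 is2 by (auto simp: o_def)
  have iq: "integrable M (\<lambda>s. \<omega> * max 0 (-(V s - q')) + (1-\<omega>) * max 0 (V s - q'))"
    using Vi by auto
  have iu: "integrable M (\<lambda>s. \<omega> * max 0 (-(V s - U s)) + (1-\<omega>) * max 0 (V s - U s))"
    using Vi Ui by auto
  have "integral\<^sup>L M (\<lambda>s. (\<omega> * max 0 (-(V s - q')) + (1-\<omega>) * max 0 (V s - q'))
       - max 0 (U s - q') * s1 (V s) + max 0 (q' - U s) * s2 (V s))
     \<le> integral\<^sup>L M (\<lambda>s. \<omega> * max 0 (-(V s - U s)) + (1-\<omega>) * max 0 (V s - U s))"
    apply (rule integral_mono)
    using iq ie1 ie2 iu apply auto[2]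
    unfolding s1_def s2_def by (rule pw_ineq[OF w])
  moreover have "integral\<^sup>L M (\<lambda>s. (\<omega> * max 0 (-(V s - q')) + (1-\<omega>) * max 0 (V s - q'))
       - max 0 (U s - q') * s1 (V s) + max 0 (q' - U s) * s2 (V s))
    = integral\<^sup>L M (\<lambda>s. \<omega> * max 0 (-(V s - q')) + (1-\<omega>) * max 0 (V s - q'))
      - integral\<^sup>L M (\<lambda>s. max 0 (U s - q')) * integral\<^sup>L M (\<lambda>s. s1 (V s))
      + integral\<^sup>L M (\<lambda>s. max 0 (q' - U s)) * integral\<^sup>L M (\<lambda>s. s2 (V s))"
    using iq ie1 ie2 by (simp add: e1[symmetric] e2[symmetric])
  moreover have "integral\<^sup>L M (\<lambda>s. max 0 (U s - q')) * integral\<^sup>L M (\<lambda>s. s1 (V s)) \<le> 0"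
    using s1V by (simp add: mult_nonneg_nonpos)
  moreover have "integral\<^sup>L M (\<lambda>s. max 0 (q' - U s)) * integral\<^sup>L M (\<lambda>s. s2 (V s)) \<ge> 0"
    using s2V by simp
  ultimately show ?thesis using phiq by linarith
qed



lemma quantile_props:
  fixes N :: "'b measure" and B :: "'b \<Rightarrow> real"
  assumes N: "prob_space N" and Bm[measurable]: "B \<in> borel_measurable N" and w: "0 < \<omega>" "\<omega> < 1"
  shows "1-\<omega> \<le> measure N {s\<in>space N. B s \<le> quantile N B (1-\<omega>)}"
    and "measure N {s\<in>space N. B s < quantile N B (1-\<omega>)} \<le> 1-\<omega>"
proof -
  interpret N: prob_space N by fact
  define D where "D = distr N borel B"
  interpret D: real_distribution D unfolding D_def by simp
  define F where "F = cdf D"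
  have F: "measure N {s\<in>space N. B s \<le> t} = F t" for t
    unfolding F_def cdf_def D_def by (subst measure_distr) (auto simp: vimage_def Int_def conj_commute)
  have Fl: "measure N {s\<in>space N. B s < t} = measure D {..<t}" for t
    unfolding D_def by (subst measure_distr) (auto simp: vimage_def Int_def conj_commute)
  define S where "S = {t. 1 - \<omega> \<le> F t}"
  have qdef: "quantile N B (1-\<omega>) = Inf S" unfolding quantile_def S_def F ..
  have mono: "x \<le> y \<Longrightarrow> F x \<le> F y" for x y unfolding F_def by (rule D.cdf_nondecreasing)
  have "\<forall>\<^sub>F t in at_top. F t > 1 - \<omega>"
    using D.cdf_lim_at_top_prob w unfolding F_def by (intro order_tendstoD) auto
  then obtain t1 where t1: "F t1 > 1 - \<omega>" by (metis eventually_happens' trivial_limit_at_top_linorder)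
  have "\<forall>\<^sub>F t in at_bot. F t < 1 - \<omega>"
    using D.cdf_lim_at_bot w unfolding F_def by (intro order_tendstoD) auto
  then obtain t0 where t0: "\<And>t. t \<le> t0 \<Longrightarrow> F t < 1 - \<omega>" by (auto simp: eventually_at_bot_linorder)
  have Sne: "S \<noteq> {}" using t1 unfolding S_def by (auto intro: less_imp_le)
  have Sbdd: "bdd_below S" unfolding bdd_below_def S_def
  proof (rule exI[of _ t0], safe)
    fix t assume "1 - \<omega> \<le> F t"
    then show "t0 \<le> t" using t0[of t] by linarith
  qed
  define q where "q = Inf S"
  have "F q \<ge> 1 - \<omega>"
  proof (rule tendsto_lowerbound)
    show "(F \<longlongrightarrow> F q) (at_right q)"
      using D.cdf_is_right_cont unfolding F_def continuous_within by simp
    have "\<forall>t>q. 1 - \<omega> \<le> F t"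
    proof (intro allI impI)
      fix t assume "q < t"
      then obtain s where "s \<in> S" "s < t" using cInf_less_iff[OF Sne Sbdd] unfolding q_def by auto
      then show "1 - \<omega> \<le> F t" using mono[of s t] unfolding S_def by auto
    qed
    then show "\<forall>\<^sub>F t in at_right q. 1 - \<omega> \<le> F t"
      unfolding eventually_at_right_field by (intro exI[of _ "q+1"]) auto
  qed simp
  then show "1-\<omega> \<le> measure N {s\<in>space N. B s \<le> quantile N B (1-\<omega>)}"
    unfolding F qdef q_def .
  have "measure D {..<q} \<le> 1 - \<omega>"
  proof (rule tendsto_upperbound)
    show "(F \<longlongrightarrow> measure D {..<q}) (at_left q)"
      unfolding F_def by (rule D.cdf_at_left)
    have "\<forall>t<q. F t \<le> 1 - \<omega>"
    proof (intro allI impI)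
      fix t assume "t < q"
      then have "t \<notin> S" using cInf_lower[OF _ Sbdd] unfolding q_def by force
      then show "F t \<le> 1 - \<omega>" unfolding S_def by auto
    qed
    then show "\<forall>\<^sub>F t in at_left q. F t \<le> 1 - \<omega>"
      unfolding eventually_at_left_field by (intro exI[of _ "q-1"]) auto
  qed simp
  then show "measure N {s\<in>space N. B s < quantile N B (1-\<omega>)} \<le> 1-\<omega>"
    unfolding Fl qdef q_def .
qed


lemma wait_Suc: "1 \<le> j \<Longrightarrow> wait_time \<tau> x b (Suc j) = max 0 (wait_time \<tau> x b j + b (\<tau> j) - x (\<tau> j))"
  by (cases j) auto

lemma idle_Suc: "1 \<le> j \<Longrightarrow> idle_time \<tau> x b (Suc j) = max 0 (- (wait_time \<tau> x b j + b (\<tau> j) - x (\<tau> j)))"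
  by (cases j) auto

lemma wait_local: "(\<And>k. 1 \<le> k \<Longrightarrow> k < j \<Longrightarrow> b (\<tau> k) = b' (\<tau> k)) \<Longrightarrow> wait_time \<tau> x b j = wait_time \<tau> x b' j"
proof (induction j)
  case 0 then show ?case by simp
next
  case (Suc j)
  show ?case
  proof (cases "j = 0")
    case True then show ?thesis by simp
  next
    case False
    then have "wait_time \<tau> x b j = wait_time \<tau> x b' j" using Suc by auto
    moreover have "b (\<tau> j) = b' (\<tau> j)" using Suc.prems False by auto
    ultimately show ?thesis using False by (simp add: wait_Suc)
  qed
qed

lemma wait_meas_PiM: "\<tau> ` {1..<j} \<subseteq> A \<Longrightarrow> (\<lambda>f. wait_time \<tau> x f j) \<in> borel_measurable (PiM A (\<lambda>_. borel))"
proof (induction j)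
  case 0 then show ?case by simp
next
  case (Suc j)
  show ?case
  proof (cases "j = 0")
    case True then show ?thesis by simp
  next
    case False
    have "\<tau> ` {1..<j} \<subseteq> A" using Suc.prems by auto
    then have m: "(\<lambda>f. wait_time \<tau> x f j) \<in> borel_measurable (PiM A (\<lambda>_. borel))" using Suc.IH by auto
    have "\<tau> j \<in> A" using Suc.prems False by auto
    then have c: "(\<lambda>f. f (\<tau> j)) \<in> borel_measurable (PiM A (\<lambda>_. borel))"
      by (rule measurable_component_singleton)
    have "(\<lambda>f. max 0 (wait_time \<tau> x f j + f (\<tau> j) - x (\<tau> j))) \<in> borel_measurable (PiM A (\<lambda>_. borel))"
      using m c by measurable
    then show ?thesis using False by (simp add: wait_Suc)
  qed
qed



lemma sum_split_first:
  assumes "1 \<le> n" shows "(\<Sum>i=1..n. f i) = f (1::nat) + (\<Sum>j=1..n-1. f (Suc j))"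
proof -
  obtain m where m: "n = Suc m" using assms by (cases n) auto
  have "(\<Sum>i=1..Suc m. f i) = f 1 + (\<Sum>i=Suc 1..Suc m. f i)"
    by (rule sum.atLeast_Suc_atMost) simp
  also have "(\<Sum>i=Suc 1..Suc m. f i) = (\<Sum>j=1..m. f (Suc j))"
    by (rule sum.shift_bounds_cl_Suc_ivl)
  finally show ?thesis using m by simp
qed

lemma sum_split_last: "1 \<le> n \<Longrightarrow> (\<Sum>i=1..n. f i) = (\<Sum>j=1..n-1. f j) + f (n::nat)"
  by (cases n) (auto simp: sum.cl_ivl_Suc)

theorem proposition5p2:
  fixes M :: "'a measure" and N :: "'b measure"
    and B :: "'b \<Rightarrow> real" and Bs :: "nat \<Rightarrow> 'a \<Rightarrow> real"
    and \<mu> \<sigma> :: "nat \<Rightarrow> real" and n :: nat and \<omega> :: real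
    and \<tau> :: "nat \<Rightarrow> nat" and x :: "nat \<Rightarrow> real"
  assumes "n \<ge> 2"
    and "0 < \<omega>" and "\<omega> < 1"
    and "prob_space N" and "B \<in> borel_measurable N"
    and "integrable N B" and "integral\<^sup>L N B = 0"
    and "integrable N (\<lambda>s. (B s)\<^sup>2)"
    and "integral\<^sup>L N (\<lambda>s. (B s - integral\<^sup>L N B)\<^sup>2) = 1"
    and "prob_space M"
    and "prob_space.indep_vars M (\<lambda>_. borel) Bs {1..n}"
    and "\<And>i. i \<in> {1..n} \<Longrightarrow> distr M borel (Bs i) = distr N borel (\<lambda>s. \<mu> i + \<sigma> i * B s)"
    and "\<And>i. i \<in> {1..n} \<Longrightarrow> \<sigma> i > 0"
    and "\<And>i j. 1 \<le> i \<Longrightarrow> i \<le> j \<Longrightarrow> j \<le> n \<Longrightarrow> \<sigma> i \<le> \<sigma> j"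
    and "\<tau> permutes {1..n}"
    and "\<And>i. i \<in> {1..n} \<Longrightarrow> x i \<ge> 0"
  shows "appt_cost M Bs n \<tau> x \<omega> \<ge>
    (\<omega> * integral\<^sup>L N (\<lambda>s. max 0 (- (B s - quantile N B (1 - \<omega>))))
     + (1 - \<omega>) * integral\<^sup>L N (\<lambda>s. max 0 (B s - quantile N B (1 - \<omega>))))
    * (\<Sum>i=1..n-1. \<sigma> i)"
proof -
  note Bm[measurable] = assms(5)
  interpret M: prob_space M by fact
  interpret N: prob_space N by fact
  define q where "q = quantile N B (1-\<omega>)"
  define K where "K = \<omega> * integral\<^sup>L N (\<lambda>s. max 0 (- (B s - q))) + (1 - \<omega>) * integral\<^sup>L N (\<lambda>s. max 0 (B s - q))"
  note qp = quantile_props[OF assms(4,5,2,3), folded q_def]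
  have K0: "K \<ge> 0" unfolding K_def using assms(2,3) by (auto intro!: add_nonneg_nonneg mult_nonneg_nonneg integral_nonneg_AE)
  have perm: "\<And>k. k \<in> {1..n} \<Longrightarrow> \<tau> k \<in> {1..n}" by (simp only: permutes_in_image[OF assms(15)])
  have Bsm[measurable]: "\<And>k. k \<in> {1..n} \<Longrightarrow> Bs k \<in> borel_measurable M"
    using assms(11) by (auto simp: M.indep_vars_def)
  have Bsi: "integrable M (Bs k)" if k: "k \<in> {1..n}" for k
  proof -
    have "integrable N (\<lambda>s. \<mu> k + \<sigma> k * B s)" using assms(6) by auto
    then have "integrable (distr N borel (\<lambda>s. \<mu> k + \<sigma> k * B s)) (\<lambda>y. y)"
      by (subst integrable_distr_eq) auto
    then have "integrable (distr M borel (Bs k)) (\<lambda>y. y)" using assms(12)[OF k] by simp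
    then show ?thesis using Bsm[OF k] by (subst (asm) integrable_distr_eq) auto
  qed
  define W where "W j s = wait_time \<tau> x (\<lambda>k. Bs k s) j" for j s
  have Wmi: "j \<le> n \<Longrightarrow> W j \<in> borel_measurable M \<and> integrable M (W j)" for j
  proof (induction j)
    case 0 then show ?case by (simp add: W_def)
  next
    case (Suc j)
    show ?case
    proof (cases "j = 0")
      case True then show ?thesis by (simp add: W_def)
    next
      case False
      then have jj: "j \<in> {1..n}" using Suc.prems by auto
      then have tj: "\<tau> j \<in> {1..n}" by (rule perm)
      have IH: "W j \<in> borel_measurable M" "integrable M (W j)" using Suc by auto
      have eq: "W (Suc j) = (\<lambda>s. max 0 (W j s + Bs (\<tau> j) s - x (\<tau> j)))"
        using False by (auto simp: W_def wait_Suc)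
      show ?thesis unfolding eq using IH Bsm[OF tj] Bsi[OF tj] by auto
    qed
  qed
  have slot: "\<sigma> (\<tau> j) * K \<le> \<omega> * integral\<^sup>L M (\<lambda>s. idle_time \<tau> x (\<lambda>k. Bs k s) (Suc j))
       + (1-\<omega>) * integral\<^sup>L M (\<lambda>s. wait_time \<tau> x (\<lambda>k. Bs k s) (Suc j))"
    if j: "j \<in> {1..n-1}" for j
  proof -
    have j1: "1 \<le> j" "j < n" using j assms(1) by auto
    have tj: "\<tau> j \<in> {1..n}" using j1 by (intro perm) auto
    have Wj: "W j \<in> borel_measurable M" "integrable M (W j)" using Wmi[of j] j1 by auto
    define U where "U s = x (\<tau> j) - W j s" for s
    have Um: "U \<in> borel_measurable M" "integrable M U" using Wj unfolding U_def by auto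
    have ind: "M.indep_var borel U borel (Bs (\<tau> j))"
    proof -
      let ?A = "\<tau> ` {1..<j}"
      have inj: "inj_on \<tau> {1..n}" using assms(15) permutes_inj_on by blast
      have A: "?A \<inter> {\<tau> j} = {}" "?A \<subseteq> {1..n}" "{\<tau> j} \<subseteq> {1..n}"
      proof -
        show "?A \<inter> {\<tau> j} = {}"
        proof (rule ccontr)
          assume "?A \<inter> {\<tau> j} \<noteq> {}"
          then obtain k where k: "k \<in> {1..<j}" "\<tau> k = \<tau> j" by auto
          then have "k = j" using inj j1 by (auto dest: inj_onD)
          then show False using k by auto
        qed
        show "?A \<subseteq> {1..n}" using j1 perm by auto
        show "{\<tau> j} \<subseteq> {1..n}" using tj by auto
      qed
      have "M.indep_var (PiM ?A (\<lambda>_. borel)) (\<lambda>\<omega>. restrict (\<lambda>i. Bs i \<omega>) ?A)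
                        (PiM {\<tau> j} (\<lambda>_. borel)) (\<lambda>\<omega>. restrict (\<lambda>i. Bs i \<omega>) {\<tau> j})"
        by (rule M.indep_var_restrict[OF assms(11) A])
      then have "M.indep_var borel ((\<lambda>f. x (\<tau> j) - wait_time \<tau> x f j) \<circ> (\<lambda>\<omega>. restrict (\<lambda>i. Bs i \<omega>) ?A))
                        borel ((\<lambda>f. f (\<tau> j)) \<circ> (\<lambda>\<omega>. restrict (\<lambda>i. Bs i \<omega>) {\<tau> j}))"
      proof (rule M.indep_var_compose)
        have "(\<lambda>f. wait_time \<tau> x f j) \<in> borel_measurable (PiM ?A (\<lambda>_. borel))"
          by (rule wait_meas_PiM) simp
        then show "(\<lambda>f. x (\<tau> j) - wait_time \<tau> x f j) \<in> borel_measurable (PiM ?A (\<lambda>_. borel))"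
          by measurable
        show "(\<lambda>f. f (\<tau> j)) \<in> borel_measurable (PiM {\<tau> j} (\<lambda>_. borel))"
          by (rule measurable_component_singleton) simp
      qed
      moreover have "(\<lambda>f. x (\<tau> j) - wait_time \<tau> x f j) \<circ> (\<lambda>\<omega>. restrict (\<lambda>i. Bs i \<omega>) ?A) = U"
      proof
        fix s
        have "wait_time \<tau> x (restrict (\<lambda>i. Bs i s) ?A) j = wait_time \<tau> x (\<lambda>k. Bs k s) j"
          by (rule wait_local) auto
        then show "((\<lambda>f. x (\<tau> j) - wait_time \<tau> x f j) \<circ> (\<lambda>\<omega>. restrict (\<lambda>i. Bs i \<omega>) ?A)) s = U s"
          by (simp add: U_def W_def)
      qed
      moreover have "(\<lambda>f. f (\<tau> j)) \<circ> (\<lambda>\<omega>. restrict (\<lambda>i. Bs i \<omega>) {\<tau> j}) = Bs (\<tau> j)"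
        by auto
      ultimately show ?thesis by simp
    qed
    have core: "\<sigma> (\<tau> j) * K \<le> integral\<^sup>L M (\<lambda>s. \<omega> * max 0 (-(Bs (\<tau> j) s - U s)) + (1-\<omega>) * max 0 (Bs (\<tau> j) s - U s))"
      unfolding K_def
      by (rule newsvendor_core[OF assms(10,4) ind Um(1) Bsm[OF tj] Um(2) Bsi[OF tj] assms(5,6) assms(12)[OF tj]
            assms(13)[OF tj] assms(2,3) qp])
    also have "\<dots> = integral\<^sup>L M (\<lambda>s. \<omega> * idle_time \<tau> x (\<lambda>k. Bs k s) (Suc j)
       + (1-\<omega>) * wait_time \<tau> x (\<lambda>k. Bs k s) (Suc j))"
      by (rule Bochner_Integration.integral_cong[OF refl])
         (use j1 in \<open>simp add: idle_Suc wait_Suc U_def W_def algebra_simps\<close>)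
    also have "\<dots> = \<omega> * integral\<^sup>L M (\<lambda>s. idle_time \<tau> x (\<lambda>k. Bs k s) (Suc j))
       + (1-\<omega>) * integral\<^sup>L M (\<lambda>s. wait_time \<tau> x (\<lambda>k. Bs k s) (Suc j))"
    proof -
      have i1: "integrable M (\<lambda>s. idle_time \<tau> x (\<lambda>k. Bs k s) (Suc j))"
        using Wj Bsi[OF tj] j1 by (simp add: idle_Suc W_def[symmetric])
      have i2: "integrable M (\<lambda>s. wait_time \<tau> x (\<lambda>k. Bs k s) (Suc j))"
        using Wmi[of "Suc j"] j1 by (simp add: W_def[abs_def])
      show ?thesis using i1 i2 by (simp add: Bochner_Integration.integral_add)
    qed
    finally show ?thesis .
  qed
  define fI where "fI i = integral\<^sup>L M (\<lambda>s. idle_time \<tau> x (\<lambda>k. Bs k s) i)" for i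
  define fW where "fW i = integral\<^sup>L M (\<lambda>s. wait_time \<tau> x (\<lambda>k. Bs k s) i)" for i
  have "appt_cost M Bs n \<tau> x \<omega> = \<omega> * (\<Sum>i=1..n. fI i) + (1-\<omega>) * (\<Sum>i=1..n. fW i)"
    unfolding appt_cost_def fI_def fW_def ..
  also have "\<dots> = (\<Sum>j=1..n-1. \<omega> * fI (Suc j) + (1-\<omega>) * fW (Suc j))"
  proof -
    have fI1: "fI 1 = 0" and fW1: "fW 1 = 0" by (simp_all add: fI_def fW_def)
    have "(\<Sum>i=1..n. fI i) = (\<Sum>j=1..n-1. fI (Suc j))" "(\<Sum>i=1..n. fW i) = (\<Sum>j=1..n-1. fW (Suc j))"
      using assms(1) sum_split_first[of n fI] sum_split_first[of n fW] fI1 fW1 by simp_all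
    then show ?thesis by (simp add: sum.distrib sum_distrib_left)
  qed
  finally have cost: "appt_cost M Bs n \<tau> x \<omega> = (\<Sum>j=1..n-1. \<omega> * fI (Suc j) + (1-\<omega>) * fW (Suc j))" .
  have "(\<Sum>j=1..n-1. \<sigma> (\<tau> j) * K) \<le> appt_cost M Bs n \<tau> x \<omega>"
    unfolding cost by (rule sum_mono) (use slot in \<open>simp add: fI_def fW_def\<close>)
  moreover have "(\<Sum>i=1..n-1. \<sigma> i) \<le> (\<Sum>j=1..n-1. \<sigma> (\<tau> j))"
  proof -
    have "(\<Sum>i=1..n. \<sigma> i) = (\<Sum>j=1..n. \<sigma> (\<tau> j))"
      using sum.permute[OF assms(15), of \<sigma>] by (simp add: o_def)
    moreover have "\<sigma> (\<tau> n) \<le> \<sigma> n" using perm[of n] assms(1) by (intro assms(14)) auto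
    ultimately show ?thesis using assms(1) sum_split_last[of n \<sigma>] sum_split_last[of n "\<lambda>j. \<sigma> (\<tau> j)"] by simp
  qed
  ultimately have "K * (\<Sum>i=1..n-1. \<sigma> i) \<le> appt_cost M Bs n \<tau> x \<omega>"
  proof -
    assume a1: "(\<Sum>j=1..n-1. \<sigma> (\<tau> j) * K) \<le> appt_cost M Bs n \<tau> x \<omega>"
      and a2: "(\<Sum>i=1..n-1. \<sigma> i) \<le> (\<Sum>j=1..n-1. \<sigma> (\<tau> j))"
    have "K * (\<Sum>i=1..n-1. \<sigma> i) \<le> K * (\<Sum>j=1..n-1. \<sigma> (\<tau> j))"
      using a2 K0 by (rule mult_left_mono)
    also have "\<dots> = (\<Sum>j=1..n-1. \<sigma> (\<tau> j) * K)" by (simp add: sum_distrib_left mult.commute)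
    finally show ?thesis using a1 by linarith
  qed
  then show ?thesis unfolding K_def q_def by (simp add: mult.commute)
qed


end
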